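(* For $n\ge1$ and all $k\ge0$, $$S(n,k)=T(n,2k)+T(n,2k+1),\qquad P(n,k)=T(n,2k+1)+T(n,2k+2);$$ equivalently, $(1+x)T_n(x)=xS_n(x^2)+x^2P_n(x^2)$ for $n\ge1$.
   Context: For a permutation $\pi$ of $[n]=\{1,\dots,n\}$, ${\rm des}(\pi)=\#\{i\in[n-1]:\pi(i)>\pi(i+1)\}$. A double descent is an index $i\in[n-2]$ with $\pi(i)>\pi(i+1)>\pi(i+2)$; $\pi$ is simsun if for every $k\in[n]$ the subword of $\pi$ consisting of the letters in $[k]$ (in order of appearance) has no double descents. Let $\mathcal{RS}_n$ be the set of simsun permutations of $[n]$. $S(n,k)=\#\{\pi\in\mathcal{RS}_n:{\rm des}(\pi)=k\}$, $S_n(x)=\sum_kS(n,k)x^k$. An interior peak is an index $i\in\{2,\dots,n-1\}$ with $\pi(i-1)<\pi(i)>\pi(i+1)$, ${\rm pk}(\pi)$ their number, $P(n,k)=\#\{\pi\in\mathcal{RS}_n:{\rm pk}(\pi)=k\}$, $P_n(x)=\sum_kP(n,k)x^k$. The number of up-down runs ${\rm uprun}(\pi)$ is the number of alternating runs of the sequence $0,\pi(1),\dots,\pi(n)$ (one plus the number of interior positions where the sequence changes direction); $T(n,k)=\#\{\pi\in\mathcal{RS}_n:{\rm uprun}(\pi)=k\}$ and $T_n(x)=\sum_kT(n,k)x^k$. *)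

theory Defs
  imports "HOL-Combinatorics.Multiset_Permutations"
begin

text \<open>Permutations of [n] are represented as lists p (one-line notation, 0-based
  list indices) with p in permutations_of_set {1..n}.\<close>

definition des :: "nat list \<Rightarrow> nat" where
  "des p = card {i. Suc i < length p \<and> p ! i > p ! Suc i}"

definition has_double_descent :: "nat list \<Rightarrow> bool" where
  "has_double_descent w \<longleftrightarrow>
     (\<exists>i. i + 2 < length w \<and> w ! i > w ! (i + 1) \<and> w ! (i + 1) > w ! (i + 2))"

definition simsun :: "nat \<Rightarrow> nat list \<Rightarrow> bool" where
  "simsun n p \<longleftrightarrow> (\<forall>k\<in>{1..n}. \<not> has_double_descent (filter (\<lambda>x. x \<le> k) p))"

definition RS :: "nat \<Rightarrow> nat list set" where
  "RS n = {p \<in> permutations_of_set {1..n}. simsun n p}"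

definition pk :: "nat list \<Rightarrow> nat" where
  "pk p = card {i. 0 < i \<and> Suc i < length p \<and> p ! (i - 1) < p ! i \<and> p ! i > p ! Suc i}"

definition alt_runs :: "nat list \<Rightarrow> nat" where
  "alt_runs q = 1 + card {j. 0 < j \<and> Suc j < length q \<and>
       ((q ! (j - 1) < q ! j) \<noteq> (q ! j < q ! Suc j))}"

definition uprun :: "nat list \<Rightarrow> nat" where
  "uprun p = alt_runs (0 # p)"

definition S :: "nat \<Rightarrow> nat \<Rightarrow> nat" where
  "S n k = card {p \<in> RS n. des p = k}"

definition P :: "nat \<Rightarrow> nat \<Rightarrow> nat" where
  "P n k = card {p \<in> RS n. pk p = k}"

definition T :: "nat \<Rightarrow> nat \<Rightarrow> nat" where
  "T n k = card {p \<in> RS n. uprun p = k}"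

end

theory Submission
  imports Defs
begin

definition dsc :: "nat list \<Rightarrow> nat \<Rightarrow> bool" where
  "dsc p i \<longleftrightarrow> Suc i < length p \<and> p ! Suc i < p ! i"

definition ins :: "nat \<Rightarrow> nat \<Rightarrow> nat list \<Rightarrow> nat list" where
  "ins j x p = take j p @ x # drop j p"

lemma des_dsc: "des p = card {i. dsc p i}"
  unfolding des_def dsc_def by simp

lemma fin_dsc: "finite {i. dsc p i}"
  by (rule finite_subset[of _ "{..<length p}"]) (auto simp: dsc_def)

lemma hdd_dsc: "has_double_descent w \<longleftrightarrow> (\<exists>i. dsc w i \<and> dsc w (Suc i))"
  unfolding has_double_descent_def dsc_def
proof (rule iffI)
  assume "\<exists>i. i + 2 < length w \<and> w ! (i + 1) < w ! i \<and> w ! (i + 2) < w ! (i + 1)"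
  then obtain i where "i + 2 < length w" "w ! (i + 1) < w ! i" "w ! (i + 2) < w ! (i + 1)" by blast
  then show "\<exists>i. (Suc i < length w \<and> w ! Suc i < w ! i) \<and> Suc (Suc i) < length w \<and> w ! Suc (Suc i) < w ! Suc i"
    by (intro exI[of _ i]) (simp add: numeral_2_eq_2)
next
  assume "\<exists>i. (Suc i < length w \<and> w ! Suc i < w ! i) \<and> Suc (Suc i) < length w \<and> w ! Suc (Suc i) < w ! Suc i"
  then obtain i where "Suc (Suc i) < length w" "w ! Suc i < w ! i" "w ! Suc (Suc i) < w ! Suc i" by blast
  then show "\<exists>i. i + 2 < length w \<and> w ! (i + 1) < w ! i \<and> w ! (i + 2) < w ! (i + 1)"
    by (intro exI[of _ i]) (simp add: numeral_2_eq_2)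
qed

lemma length_ins[simp]: "j \<le> length p \<Longrightarrow> length (ins j x p) = Suc (length p)"
  by (simp add: ins_def)

lemma nth_ins: "j \<le> length p \<Longrightarrow> i \<le> length p \<Longrightarrow>
  ins j x p ! i = (if i < j then p ! i else if i = j then x else p ! (i - 1))"
proof -
  assume a: "j \<le> length p" "i \<le> length p"
  consider "i < j" | "i = j" | "j < i" by linarith
  then show ?thesis
  proof cases
    case 1 then show ?thesis using a by (simp add: ins_def nth_append)
  next
    case 2 then show ?thesis using a by (simp add: ins_def nth_append)
  next
    case 3
    then obtain t where t: "i = Suc (j + t)" by (metis less_imp_Suc_add)
    have "ins j x p ! i = (x # drop j p) ! (Suc t)" using a t by (simp add: ins_def nth_append)
    also have "\<dots> = p ! (j + t)" using a t by simp
    finally show ?thesis using t by simp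
  qed
qed

lemma dsc_ins:
  assumes "j \<le> length p" "\<forall>y\<in>set p. y < x"
  shows "dsc (ins j x p) i = (if Suc i < j then dsc p i else if Suc i = j then False
     else if i = j then j < length p else dsc p (i - 1))"
proof -
  have lt: "\<And>k. k < length p \<Longrightarrow> p ! k < x" using assms(2) by auto
  show ?thesis
  proof -
    consider "Suc i < j" | "Suc i = j" | "i = j" | "j < i" by linarith
    then show ?thesis
    proof cases
      case 1 then show ?thesis using assms(1) by (simp add: dsc_def nth_ins)
    next
      case 2 then show ?thesis using assms(1) lt[of i] by (auto simp: dsc_def nth_ins)
    next
      case 3 then show ?thesis using assms(1) lt[of i] by (auto simp: dsc_def nth_ins)
    next
      case 4
      then obtain t where t: "i = Suc t" "j \<le> t" by (metis Suc_le_eq less_imp_Suc_add le_add1 add_Suc_right)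
      show ?thesis
      proof (cases "Suc i < Suc (length p)")
        case True then show ?thesis using t assms(1) by (simp add: dsc_def nth_ins)
      next
        case False then show ?thesis using t assms(1) by (simp add: dsc_def)
      qed
    qed
  qed
qed

lemma nodd_ins:
  assumes "j \<le> length p" "\<forall>y\<in>set p. y < x" "\<not> has_double_descent p" "\<not> dsc p j"
  shows "\<not> has_double_descent (ins j x p)"
proof
  assume "has_double_descent (ins j x p)"
  then obtain i where i: "dsc (ins j x p) i" "dsc (ins j x p) (Suc i)" by (auto simp: hdd_dsc)
  have np: "\<And>k. \<not> (dsc p k \<and> dsc p (Suc k))" using assms(3) by (auto simp: hdd_dsc)
  consider "Suc (Suc i) < j" | "Suc (Suc i) = j" | "Suc i = j" | "i = j" | "j < i" by linarith
  then show False
  proof cases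
    case 1 then show ?thesis using i np[of i] by (simp add: dsc_ins assms(1,2))
  next
    case 2 then show ?thesis using i by (simp add: dsc_ins assms(1,2))
  next
    case 3 then show ?thesis using i by (simp add: dsc_ins assms(1,2))
  next
    case 4 then show ?thesis using i assms(4) by (simp add: dsc_ins assms(1,2))
  next
    case 5
    then obtain t where t: "i = Suc t" "j \<le> t" by (metis Suc_le_eq less_imp_Suc_add le_add1 add_Suc_right)
    then show ?thesis using i np[of t] by (simp add: dsc_ins assms(1,2))
  qed
qed

lemma des_ins:
  assumes "j \<le> length p" "\<forall>y\<in>set p. y < x"
  shows "des (ins j x p) = des p + (if j < length p then 1 else 0) - (if 0 < j \<and> dsc p (j - 1) then 1 else 0)"
proof -
  define A where "A = {i. dsc p i \<and> Suc i < j}"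
  define B where "B = {i. dsc p i \<and> Suc i = j}"
  define C where "C = {i. dsc p i \<and> j \<le> i}"
  define E where "E = (if j < length p then {j} else {})"
  have fA: "finite A" "finite B" "finite C" "finite E"
    unfolding A_def B_def C_def E_def by (auto intro: finite_subset[OF _ fin_dsc[of p]])
  have fS: "finite (Suc ` C)" using fA by simp
  have Dp: "{i. dsc p i} = A \<union> B \<union> C" unfolding A_def B_def C_def by auto
  have Dq: "{i. dsc (ins j x p) i} = A \<union> E \<union> Suc ` C"
  proof (rule set_eqI)
    fix i
    show "i \<in> {i. dsc (ins j x p) i} \<longleftrightarrow> i \<in> A \<union> E \<union> Suc ` C"
    proof (cases "j < i")
      case True
      then obtain t where t: "i = Suc t" "j \<le> t" by (metis Suc_le_eq less_imp_Suc_add le_add1 add_Suc_right)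
      then show ?thesis unfolding A_def E_def C_def using True by (auto simp: dsc_ins assms)
    next
      case False
      then show ?thesis unfolding A_def E_def C_def by (auto simp: dsc_ins assms)
    qed
  qed
  have cB: "card B = (if 0 < j \<and> dsc p (j - 1) then 1 else 0)"
  proof -
    have "B = (if 0 < j \<and> dsc p (j - 1) then {j - 1} else {})" unfolding B_def by auto
    then show ?thesis by simp
  qed
  have cE: "card E = (if j < length p then 1 else 0)" unfolding E_def by simp
  have c1: "card (A \<union> B) = card A + card B"
    by (rule card_Un_disjoint) (use fA in \<open>auto simp: A_def B_def\<close>)
  have c2: "card (A \<union> B \<union> C) = card (A \<union> B) + card C"
    by (rule card_Un_disjoint) (use fA in \<open>auto simp: A_def B_def C_def\<close>)
  have "des p = card A + card B + card C"
    unfolding des_dsc Dp using c1 c2 by simp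
  moreover have "des (ins j x p) = card A + card E + card C"
  proof -
    have c1: "card (A \<union> E) = card A + card E"
      by (rule card_Un_disjoint) (use fA in \<open>auto simp: A_def E_def\<close>)
    have c2: "card (A \<union> E \<union> Suc ` C) = card (A \<union> E) + card (Suc ` C)"
      by (rule card_Un_disjoint) (use fA fS in \<open>auto simp: A_def E_def C_def\<close>)
    have "card (A \<union> E \<union> Suc ` C) = card A + card E + card (Suc ` C)"
      using c1 c2 by simp
    then show ?thesis unfolding des_dsc Dq by (simp add: card_image)
  qed
  ultimately show ?thesis using cB cE by simp
qed

lemma RS_elem:
  assumes "p \<in> RS m"
  shows "set p = {1..m}" "distinct p" "length p = m"
proof -
  show s: "set p = {1..m}" and d: "distinct p" using assms by (auto simp: RS_def permutations_of_set_def)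
  show "length p = m" using distinct_card[OF d] s by simp
qed

lemma filter_all: "\<forall>y\<in>set q. y \<le> k \<Longrightarrow> filter (\<lambda>x. x \<le> k) q = q"
  by (simp add: filter_id_conv)

lemma RS_nodd:
  assumes "p \<in> RS m"
  shows "\<not> has_double_descent p"
proof (cases "m = 0")
  case True
  then have "p = []" using RS_elem(3)[OF assms] by simp
  then show ?thesis by (simp add: has_double_descent_def)
next
  case False
  then have "m \<in> {1..m}" by simp
  then have "\<not> has_double_descent (filter (\<lambda>x. x \<le> m) p)"
    using assms by (auto simp: RS_def simsun_def)
  moreover have "filter (\<lambda>x. x \<le> m) p = p" using RS_elem(1)[OF assms] by (intro filter_all) auto
  ultimately show ?thesis by simp
qed

lemma set_ins: "set (ins j x p) = insert x (set p)"
proof -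
  have "set (ins j x p) = insert x (set (take j p) \<union> set (drop j p))" by (simp add: ins_def)
  also have "set (take j p) \<union> set (drop j p) = set p"
    by (metis set_append append_take_drop_id)
  finally show ?thesis .
qed

lemma distinct_ins: "distinct p \<Longrightarrow> x \<notin> set p \<Longrightarrow> distinct (ins j x p)"
proof -
  assume d: "distinct p" and x: "x \<notin> set p"
  have h: "distinct (take j p) \<and> distinct (drop j p) \<and> set (take j p) \<inter> set (drop j p) = {}"
    using distinct_append[of "take j p" "drop j p"] d by simp
  moreover have "x \<notin> set (take j p)" "x \<notin> set (drop j p)" using x
    by (meson in_set_takeD in_set_dropD)+
  ultimately show ?thesis unfolding ins_def by (simp add: distinct_append)
qed

lemma filter_ins: "\<not> Q x \<Longrightarrow> filter Q (ins j x p) = filter Q p"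
proof -
  assume "\<not> Q x"
  then have "filter Q (ins j x p) = filter Q (take j p) @ filter Q (drop j p)" by (simp add: ins_def)
  also have "\<dots> = filter Q (take j p @ drop j p)" by (simp only: filter_append)
  finally show ?thesis by simp
qed

lemma ins_RS:
  assumes "p \<in> RS m" "j \<le> m" "\<not> dsc p j"
  shows "ins j (Suc m) p \<in> RS (Suc m)"
proof -
  note e = RS_elem[OF assms(1)]
  have lt: "\<forall>y\<in>set p. y < Suc m" using e(1) by auto
  have jl: "j \<le> length p" using e(3) assms(2) by simp
  have sq: "set (ins j (Suc m) p) = {1..Suc m}"
  proof -
    have "set (ins j (Suc m) p) = insert (Suc m) (set p)" by (rule set_ins)
    then show ?thesis using e(1) by auto
  qed
  have dq: "distinct (ins j (Suc m) p)"
  proof -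
    have "Suc m \<notin> set p" using e(1) by auto
    then show ?thesis using e(2) by (rule distinct_ins[rotated])
  qed
  have ss: "simsun (Suc m) (ins j (Suc m) p)"
    unfolding simsun_def
  proof
    fix k assume k: "k \<in> {1..Suc m}"
    show "\<not> has_double_descent (filter (\<lambda>x. x \<le> k) (ins j (Suc m) p))"
    proof (cases "k = Suc m")
      case True
      have "filter (\<lambda>x. x \<le> k) (ins j (Suc m) p) = ins j (Suc m) p"
        using sq True by (intro filter_all) auto
      then show ?thesis using nodd_ins[OF jl lt RS_nodd[OF assms(1)] assms(3)] by simp
    next
      case False
      then have km: "k \<in> {1..m}" using k by auto
      have "filter (\<lambda>x. x \<le> k) (ins j (Suc m) p) = filter (\<lambda>x. x \<le> k) p"
        using km by (intro filter_ins) auto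
      then show ?thesis using assms(1) km by (simp add: RS_def simsun_def)
    qed
  qed
  show ?thesis using sq dq ss unfolding RS_def permutations_of_set_def by simp
qed

lemma RS_ins:
  assumes "q \<in> RS (Suc m)"
  shows "\<exists>p j. q = ins j (Suc m) p \<and> p \<in> RS m \<and> j \<le> m \<and> \<not> dsc p j"
proof -
  note e = RS_elem[OF assms]
  have "Suc m \<in> set q" using e(1) by simp
  then obtain xs ys where q: "q = xs @ Suc m # ys" by (meson split_list)
  define p where "p = xs @ ys"
  define j where "j = length xs"
  have qi: "q = ins j (Suc m) p" unfolding q p_def j_def ins_def by simp
  have nin: "Suc m \<notin> set xs" "Suc m \<notin> set ys" using e(2) q by auto
  have dp: "distinct p" using e(2) unfolding q p_def by simp
  have sp: "set p = {1..m}"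
  proof -
    have "set p = set q - {Suc m}" using q p_def nin by auto
    also have "\<dots> = {1..Suc m} - {Suc m}" using e(1) by simp
    also have "\<dots> = {1..m}" by (rule set_eqI) (simp add: le_Suc_eq, linarith)
    finally show ?thesis .
  qed
  have lp: "length p = m" using distinct_card[OF dp] sp by simp
  have sm: "simsun m p"
    unfolding simsun_def
  proof
    fix k assume km: "k \<in> {1..m}"
    have "filter (\<lambda>x. x \<le> k) q = filter (\<lambda>x. x \<le> k) p" using km unfolding q p_def by simp
    moreover have "k \<in> {1..Suc m}" using km by auto
    moreover have "\<not> has_double_descent (filter (\<lambda>x. x \<le> k) q)"
      using assms \<open>k \<in> {1..Suc m}\<close> unfolding RS_def simsun_def by blast
    ultimately show "\<not> has_double_descent (filter (\<lambda>x. x \<le> k) p)" by simp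
  qed
  have pRS: "p \<in> RS m" using dp sp sm unfolding RS_def permutations_of_set_def by simp
  have jm: "j \<le> m" using lp p_def j_def by simp
  have nd: "\<not> dsc p j"
  proof
    assume d: "dsc p j"
    have "Suc m \<in> {1..Suc m}" by simp
    have "filter (\<lambda>x. x \<le> Suc m) q = q" using e(1) by (intro filter_all) auto
    moreover have "\<not> has_double_descent (filter (\<lambda>x. x \<le> Suc m) q)"
      using assms \<open>Suc m \<in> {1..Suc m}\<close> unfolding RS_def simsun_def by blast
    ultimately have nq: "\<not> has_double_descent q" by simp
    have lt: "\<forall>y\<in>set p. y < Suc m" using sp by auto
    have jl: "j \<le> length p" using jm lp by simp
    have jlt: "j < length p" using d by (simp add: dsc_def)
    have a1: "dsc q j" using dsc_ins[OF jl lt, of j] jlt unfolding qi by simp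
    have a2: "dsc q (Suc j)" using dsc_ins[OF jl lt, of "Suc j"] d unfolding qi by simp
    have "dsc q j \<and> dsc q (Suc j)" using a1 a2 by blast
    then show False using nq by (auto simp: hdd_dsc)
  qed
  show ?thesis by (intro exI[of _ p] exI[of _ j]) (use qi pRS jm nd in simp)
qed

lemma ins_inj:
  assumes "ins j x p = ins j' x p'" "x \<notin> set p" "x \<notin> set p'" "j \<le> length p" "j' \<le> length p'"
  shows "p = p' \<and> j = j'"
proof -
  have "x \<notin> set (take j p)" "x \<notin> set (drop j p)" using assms(2)
    by (meson in_set_takeD in_set_dropD)+
  then have "take j p = take j' p' \<and> drop j p = drop j' p'"
    using assms(1) unfolding ins_def by (simp add: append_Cons_eq_iff)
  then have "p = p'" "length (take j p) = length (take j' p')"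
    by (metis append_take_drop_id, simp)
  then show ?thesis using assms(4,5) by (simp add: min_def split: if_splits)
qed

lemma count_Suc:
  "card {q \<in> RS (Suc m). Q q} = (\<Sum>p\<in>RS m. card {j. j \<le> m \<and> \<not> dsc p j \<and> Q (ins j (Suc m) p)})"
proof -
  define f where "f = (\<lambda>(p, j). ins j (Suc m) p)"
  define X where "X = Sigma (RS m) (\<lambda>p. {j. j \<le> m \<and> \<not> dsc p j \<and> Q (ins j (Suc m) p)})"
  have fin: "finite (RS m)" unfolding RS_def
    by (rule finite_subset[OF _ finite_permutations_of_set[of "{1..m}"]]) auto
  have img: "{q \<in> RS (Suc m). Q q} = f ` X"
  proof
    show "{q \<in> RS (Suc m). Q q} \<subseteq> f ` X"
    proof
      fix q assume q: "q \<in> {q \<in> RS (Suc m). Q q}"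
      then obtain p j where "q = ins j (Suc m) p" "p \<in> RS m" "j \<le> m" "\<not> dsc p j"
        using RS_ins by blast
      then show "q \<in> f ` X" using q unfolding f_def X_def by (auto intro!: image_eqI[of _ _ "(p, j)"])
    qed
  next
    show "f ` X \<subseteq> {q \<in> RS (Suc m). Q q}"
      unfolding f_def X_def by (auto intro: ins_RS)
  qed
  have inj: "inj_on f X"
  proof (rule inj_onI)
    fix a b assume a: "a \<in> X" and b: "b \<in> X" and eq: "f a = f b"
    obtain p j where pj: "a = (p, j)" by fastforce
    obtain p' j' where pj': "b = (p', j')" by fastforce
    have "p \<in> RS m" "p' \<in> RS m" "j \<le> m" "j' \<le> m" using a b pj pj' unfolding X_def by auto
    then show "a = b" using ins_inj[of j "Suc m" p j' p'] eq pj pj' RS_elem unfolding f_def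
      by fastforce
  qed
  have "card {q \<in> RS (Suc m). Q q} = card X" unfolding img using card_image[OF inj] .
  also have "\<dots> = (\<Sum>p\<in>RS m. card {j. j \<le> m \<and> \<not> dsc p j \<and> Q (ins j (Suc m) p)})"
    unfolding X_def by (rule card_SigmaI) (use fin in auto)
  finally show ?thesis .
qed

lemma F_ins:
  assumes "j \<le> length p" "\<forall>y\<in>set p. y < x" "1 \<le> length p"
  shows "dsc (ins j x p) 0 \<longleftrightarrow> (j = 0 \<or> (2 \<le> j \<and> dsc p 0))"
  using dsc_ins[OF assms(1,2), of 0] assms(3) by auto

lemma L_ins:
  assumes "j \<le> length p" "\<forall>y\<in>set p. y < x" "2 \<le> length p"
  shows "dsc (ins j x p) (length (ins j x p) - 2) \<longleftrightarrow>
     (j \<noteq> length p \<and> (Suc j = length p \<or> dsc p (length p - 2)))"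
proof -
  define m where "m = length p"
  have e: "length (ins j x p) - 2 = m - 1" using assms(1) m_def by simp
  have D: "dsc (ins j x p) (m - 1) = (if Suc (m - 1) < j then dsc p (m - 1) else if Suc (m - 1) = j then False
     else if m - 1 = j then j < m else dsc p (m - 1 - 1))"
    using dsc_ins[OF assms(1,2), of "m - 1"] m_def by simp
  have m2: "2 \<le> m" using assms(3) m_def by simp
  have jm: "j \<le> m" using assms(1) m_def by simp
  have s1: "Suc (m - 1) = m" using m2 by simp
  have s2: "m - 1 - 1 = m - 2" by simp
  have goal: "dsc (ins j x p) (m - 1) \<longleftrightarrow> (j \<noteq> m \<and> (Suc j = m \<or> dsc p (m - 2)))"
  proof -
    consider "j = m" | "Suc j = m" | "Suc j < m" using jm by linarith
    then show ?thesis
    proof cases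
      case 1 then show ?thesis using D s1 by simp
    next
      case 2 then show ?thesis using D s1 by auto
    next
      case 3 then show ?thesis using D s1 s2 by auto
    qed
  qed
  show ?thesis unfolding e using goal m_def by simp
qed

definition TFt :: "nat list \<Rightarrow> bool" where
  "TFt q \<longleftrightarrow> dsc q 0 \<and> \<not> dsc q (length q - 2)"
definition FTt :: "nat list \<Rightarrow> bool" where
  "FTt q \<longleftrightarrow> \<not> dsc q 0 \<and> dsc q (length q - 2)"

lemma dsc_lt: "dsc p i \<Longrightarrow> Suc i < length p" by (simp add: dsc_def)

context
  fixes p :: "nat list" and m :: nat
  assumes pR: "p \<in> RS m" and m2: "2 \<le> m"
begin

lemma lp: "length p = m" using RS_elem(3)[OF pR] .
lemma ltx: "\<forall>y\<in>set p. y < Suc m" using RS_elem(1)[OF pR] by auto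
lemma np: "\<not> (dsc p i \<and> dsc p (Suc i))" using RS_nodd[OF pR] by (auto simp: hdd_dsc)

lemma Fi: "j \<le> m \<Longrightarrow> dsc (ins j (Suc m) p) 0 \<longleftrightarrow> (j = 0 \<or> (2 \<le> j \<and> dsc p 0))"
  using F_ins[of j p "Suc m"] lp ltx m2 by simp
lemma Li: "j \<le> m \<Longrightarrow> dsc (ins j (Suc m) p) (length (ins j (Suc m) p) - 2) \<longleftrightarrow>
     (j \<noteq> m \<and> (Suc j = m \<or> dsc p (m - 2)))"
  using L_ins[of j p "Suc m"] lp ltx m2 by simp
lemma Di: "j \<le> m \<Longrightarrow> des (ins j (Suc m) p) = des p + (if j < m then 1 else 0) - (if 0 < j \<and> dsc p (j - 1) then 1 else 0)"
  using des_ins[of j p "Suc m"] lp ltx by simp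

definition X where "X = {j \<in> {1..<m}. dsc p (j - 1)}"
definition Y where "Y = {j \<in> {1..<m}. dsc p j}"
definition Z where "Z = {j \<in> {1..<m}. \<not> dsc p j \<and> \<not> dsc p (j - 1)}"

lemma cX: "card X = des p"
proof -
  have "X = Suc ` {i. dsc p i}"
  proof
    show "X \<subseteq> Suc ` {i. dsc p i}"
    proof
      fix j assume "j \<in> X"
      then have "j = Suc (j - 1)" "dsc p (j - 1)" unfolding X_def by auto
      then show "j \<in> Suc ` {i. dsc p i}" by (metis imageI mem_Collect_eq)
    qed
    show "Suc ` {i. dsc p i} \<subseteq> X" unfolding X_def using dsc_lt lp by auto
  qed
  then show ?thesis by (simp add: card_image des_dsc)
qed

lemma cY: "card Y = des p - (if dsc p 0 then 1 else 0)"
proof -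
  have "Y = {i. dsc p i} - {0}" unfolding Y_def using lp by (auto simp: dsc_def)
  then show ?thesis using fin_dsc[of p] by (simp add: des_dsc card_Diff_singleton_if)
qed

lemma cZ: "card Z = (m - 1) - des p - (des p - (if dsc p 0 then 1 else 0))"
proof -
  have u: "{1..<m} = (X \<union> Y) \<union> Z" unfolding X_def Y_def Z_def by auto
  have f: "finite X" "finite Y" "finite Z" unfolding X_def Y_def Z_def by auto
  have d1: "X \<inter> Y = {}"
  proof -
    { fix j assume "j \<in> X" "j \<in> Y"
      then have "1 \<le> j" "dsc p (j - 1)" "dsc p j" unfolding X_def Y_def by auto
      then have False using np[of "j - 1"] by simp }
    then show ?thesis by blast
  qed
  have "card (X \<union> Y) = card X + card Y" using f d1 by (simp add: card_Un_disjoint)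
  moreover have "card ((X \<union> Y) \<union> Z) = card (X \<union> Y) + card Z"
    using f by (intro card_Un_disjoint) (auto simp: X_def Y_def Z_def)
  moreover have "m - 1 = card ((X \<union> Y) \<union> Z)" unfolding u[symmetric] by simp
  ultimately have "m - 1 = card X + card Y + card Z" by simp
  then show ?thesis using cX cY by simp
qed

definition GTF :: "nat \<Rightarrow> nat set" where "GTF e = {j. j \<le> m \<and> \<not> dsc p j \<and> TFt (ins j (Suc m) p) \<and> des (ins j (Suc m) p) = e}"
definition GFT :: "nat \<Rightarrow> nat set" where "GFT e = {j. j \<le> m \<and> \<not> dsc p j \<and> FTt (ins j (Suc m) p) \<and> des (ins j (Suc m) p) = e}"

lemma lenq: "j \<le> m \<Longrightarrow> length (ins j (Suc m) p) = Suc m" using lp by simp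

lemma memTF: "j \<in> GTF e \<longleftrightarrow> j \<le> m \<and> \<not> dsc p j \<and> (j = 0 \<or> (2 \<le> j \<and> dsc p 0)) \<and>
   \<not> (j \<noteq> m \<and> (Suc j = m \<or> dsc p (m - 2))) \<and>
   des p + (if j < m then 1 else 0) - (if 0 < j \<and> dsc p (j - 1) then 1 else 0) = e"
proof (cases "j \<le> m")
  case True
  have t: "TFt (ins j (Suc m) p) \<longleftrightarrow> (j = 0 \<or> (2 \<le> j \<and> dsc p 0)) \<and> \<not> (j \<noteq> m \<and> (Suc j = m \<or> dsc p (m - 2)))"
    by (simp only: TFt_def Fi[OF True] Li[OF True])
  show ?thesis unfolding GTF_def mem_Collect_eq t Di[OF True] using True by blast
next
  case False
  then show ?thesis unfolding GTF_def by simp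
qed

lemma memFT: "j \<in> GFT e \<longleftrightarrow> j \<le> m \<and> \<not> dsc p j \<and> \<not> (j = 0 \<or> (2 \<le> j \<and> dsc p 0)) \<and>
   (j \<noteq> m \<and> (Suc j = m \<or> dsc p (m - 2))) \<and>
   des p + (if j < m then 1 else 0) - (if 0 < j \<and> dsc p (j - 1) then 1 else 0) = e"
proof (cases "j \<le> m")
  case True
  have t: "FTt (ins j (Suc m) p) \<longleftrightarrow> \<not> (j = 0 \<or> (2 \<le> j \<and> dsc p 0)) \<and> (j \<noteq> m \<and> (Suc j = m \<or> dsc p (m - 2)))"
    by (simp only: FTt_def Fi[OF True] Li[OF True])
  show ?thesis unfolding GFT_def mem_Collect_eq t Di[OF True] using True by blast
next
  case False
  then show ?thesis unfolding GFT_def by simp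
qed

lemma ndm: "\<not> dsc p m" "\<not> dsc p (m - 1)" using lp m2 by (auto simp: dsc_def)
lemma npj: "0 < j \<Longrightarrow> dsc p (j - 1) \<Longrightarrow> \<not> dsc p j" using np[of "j - 1"] by simp
lemma d1: "dsc p 0 \<Longrightarrow> 1 \<le> des p"
proof -
  assume "dsc p 0"
  then have "{i. dsc p i} \<noteq> {}" by auto
  then show ?thesis unfolding des_dsc using fin_dsc[of p] by (simp add: Suc_le_eq card_gt_0_iff)
qed

end

definition hh :: "nat \<Rightarrow> nat \<Rightarrow> nat \<Rightarrow> nat" where
  "hh m d e = (if e = d then d else if e = Suc d then m - 1 - 2 * d else 0)"

context
  fixes p :: "nat list" and m :: nat
  assumes pR: "p \<in> RS m" and m2: "2 \<le> m"
begin

lemma A1_TF: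
  assumes F: "dsc p 0" and nL: "\<not> dsc p (m - 2)"
  shows "card (GTF p m e) = hh m (des p) e"
proof -
  note mem = memTF[OF pR m2] and ndm = ndm[OF pR m2] and npj = npj[OF pR m2]
  note X = X_def[OF pR m2] and Z = Z_def[OF pR m2]
  have 1: "e = des p \<Longrightarrow> GTF p m e = insert m (X p m - {1})"
  proof (rule set_eqI)
    fix j assume e: "e = des p"
    show "j \<in> GTF p m e \<longleftrightarrow> j \<in> insert m (X p m - {1})"
    proof
      assume "j \<in> GTF p m e"
      then have h: "j \<le> m" "\<not> dsc p j" "j = 0 \<or> (2 \<le> j \<and> dsc p 0)"
        "des p + (if j < m then 1 else 0) - (if 0 < j \<and> dsc p (j - 1) then 1 else 0) = e"
        unfolding mem by blast+
      show "j \<in> insert m (X p m - {1})"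
      proof (cases "j = m")
        case True then show ?thesis by simp
      next
        case False
        then have jm: "j < m" using h(1) by simp
        have j2: "2 \<le> j" using h(2,3) F by auto
        have "dsc p (j - 1)"
        proof (rule ccontr)
          assume "\<not> dsc p (j - 1)"
          then show False using h(4) jm e by simp
        qed
        then show ?thesis unfolding X using jm j2 by simp
      qed
    next
      assume j: "j \<in> insert m (X p m - {1})"
      show "j \<in> GTF p m e"
      proof (cases "j = m")
        case True then show ?thesis unfolding mem using e F ndm m2 by auto
      next
        case False
        then have j2: "2 \<le> j" "j < m" "dsc p (j - 1)" using j unfolding X by auto
        have "Suc j \<noteq> m"
        proof
          assume "Suc j = m"
          then have "j - 1 = m - 2" by simp
          then show False using j2 nL by simp
        qed
        then show ?thesis unfolding mem using e F j2 npj[of j] nL by auto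
      qed
    qed
  qed
  have 2: "e = Suc (des p) \<Longrightarrow> GTF p m e = Z p m - {m - 1}"
  proof (rule set_eqI)
    fix j assume e: "e = Suc (des p)"
    show "j \<in> GTF p m e \<longleftrightarrow> j \<in> Z p m - {m - 1}"
    proof
      assume "j \<in> GTF p m e"
      then have h: "j \<le> m" "\<not> dsc p j" "j = 0 \<or> (2 \<le> j \<and> dsc p 0)"
        "\<not> (j \<noteq> m \<and> (Suc j = m \<or> dsc p (m - 2)))"
        "des p + (if j < m then 1 else 0) - (if 0 < j \<and> dsc p (j - 1) then 1 else 0) = e"
        unfolding mem by blast+
      have jm: "j \<noteq> m"
      proof
        assume "j = m"
        then show False using h(5) e ndm by simp
      qed
      then have jm': "j < m" "Suc j \<noteq> m" using h(1,4) by auto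
      have j2: "2 \<le> j" using h(2,3) F by auto
      have "\<not> dsc p (j - 1)"
      proof
        assume "dsc p (j - 1)"
        then show False using h(5) jm' j2 e by simp
      qed
      then show "j \<in> Z p m - {m - 1}" unfolding Z using jm' j2 h(2) by auto
    next
      assume j: "j \<in> Z p m - {m - 1}"
      then have j2: "1 \<le> j" "j < m" "\<not> dsc p j" "\<not> dsc p (j - 1)" "Suc j \<noteq> m" unfolding Z by auto
      have "j \<noteq> 1" using j2 F by auto
      then show "j \<in> GTF p m e" unfolding mem using e F j2 nL by auto
    qed
  qed
  have 3: "e \<noteq> des p \<Longrightarrow> e \<noteq> Suc (des p) \<Longrightarrow> GTF p m e = {}"
  proof -
    assume e1: "e \<noteq> des p" and e2: "e \<noteq> Suc (des p)"
    { fix j assume "j \<in> GTF p m e"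
      then have h: "j \<le> m"
        "des p + (if j < m then 1 else 0) - (if 0 < j \<and> dsc p (j - 1) then 1 else 0) = e"
        unfolding mem by blast+
      have False
      proof (cases "j = m")
        case True then show False using h(2) e1 ndm by simp
      next
        case False then show False using h e1 e2 by (simp split: if_splits)
      qed }
    then show ?thesis by blast
  qed
  have cX: "card (X p m) = des p" by (rule cX[OF pR m2])
  have cZ: "card (Z p m) = (m - 1) - des p - (des p - 1)" using cZ[OF pR m2] F by simp
  have fX: "finite (X p m)" "finite (Z p m)" unfolding X Z by auto
  have dd: "1 \<le> des p" by (rule d1[OF pR m2 F])
  have oneX: "1 \<in> X p m" unfolding X using F m2 by auto
  have mX: "m \<notin> X p m" unfolding X by auto
  have mZ: "m - 1 \<in> Z p m"
  proof -
    have "m - 1 - 1 = m - 2" by simp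
    then show ?thesis unfolding Z using ndm nL m2 by simp
  qed
  show ?thesis
  proof (cases "e = des p")
    case True
    have "card (GTF p m e) = Suc (card (X p m - {1}))" using 1[OF True] fX mX by simp
    also have "\<dots> = des p" using oneX fX cX dd by simp
    finally show ?thesis using True by (simp add: hh_def)
  next
    case False
    show ?thesis
    proof (cases "e = Suc (des p)")
      case True
      have "card (GTF p m e) = card (Z p m) - 1" using 2[OF True] fX mZ by simp
      moreover have "card (Z p m) \<ge> 1" using mZ fX by (metis One_nat_def Suc_leI card_gt_0_iff empty_iff)
      ultimately show ?thesis using True False cZ dd by (simp add: hh_def)
    next
      case False2: False
      then show ?thesis using 3 False by (simp add: hh_def)
    qed
  qed
qed


lemma A1_FT:
  assumes F: "dsc p 0" and nL: "\<not> dsc p (m - 2)"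
  shows "GFT p m e = {}"
proof -
  note mem = memFT[OF pR m2]
  { fix j assume "j \<in> GFT p m e"
    then have h: "\<not> (j = 0 \<or> (2 \<le> j \<and> dsc p 0))" "j \<noteq> m \<and> (Suc j = m \<or> dsc p (m - 2))"
      unfolding mem by blast+
    then have "j = 1" using F by auto
    then have False using h(2) nL F by (auto simp: numeral_2_eq_2) }
  then show ?thesis by blast
qed

lemma A2_TF:
  assumes nF: "\<not> dsc p 0" and L: "dsc p (m - 2)"
  shows "GTF p m e = {}"
proof -
  note mem = memTF[OF pR m2]
  { fix j assume "j \<in> GTF p m e"
    then have h: "j = 0 \<or> (2 \<le> j \<and> dsc p 0)" "\<not> (j \<noteq> m \<and> (Suc j = m \<or> dsc p (m - 2)))"
      unfolding mem by blast+
    then have "j = 0" using nF by auto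
    then have False using h(2) L m2 by auto }
  then show ?thesis by blast
qed

lemma A2_FT:
  assumes nF: "\<not> dsc p 0" and L: "dsc p (m - 2)"
  shows "card (GFT p m e) = hh m (des p) e"
proof -
  note mem = memFT[OF pR m2] and ndm = ndm[OF pR m2] and npj = npj[OF pR m2]
  note X = X_def[OF pR m2] and Z = Z_def[OF pR m2]
  have base: "\<And>j. j \<in> GFT p m e \<longleftrightarrow> 1 \<le> j \<and> j < m \<and> \<not> dsc p j \<and>
      des p + 1 - (if dsc p (j - 1) then 1 else 0) = e"
  proof -
    fix j
    show "j \<in> GFT p m e \<longleftrightarrow> 1 \<le> j \<and> j < m \<and> \<not> dsc p j \<and>
      des p + 1 - (if dsc p (j - 1) then 1 else 0) = e"
    proof
      assume "j \<in> GFT p m e"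
      then have h: "j \<le> m" "\<not> dsc p j" "\<not> (j = 0 \<or> (2 \<le> j \<and> dsc p 0))"
        "j \<noteq> m \<and> (Suc j = m \<or> dsc p (m - 2))"
        "des p + (if j < m then 1 else 0) - (if 0 < j \<and> dsc p (j - 1) then 1 else 0) = e"
        unfolding mem by blast+
      have "1 \<le> j" "j < m" using h(1,3,4) by auto
      then show "1 \<le> j \<and> j < m \<and> \<not> dsc p j \<and> des p + 1 - (if dsc p (j - 1) then 1 else 0) = e"
        using h(2,5) by simp
    next
      assume h: "1 \<le> j \<and> j < m \<and> \<not> dsc p j \<and> des p + 1 - (if dsc p (j - 1) then 1 else 0) = e"
      then show "j \<in> GFT p m e" unfolding mem using nF L by auto
    qed
  qed
  have fX: "finite (X p m)" "finite (Z p m)" unfolding X Z by auto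
  show ?thesis
  proof (cases "e = des p")
    case True
    have "GFT p m e = X p m"
    proof (rule set_eqI)
      fix j show "j \<in> GFT p m e \<longleftrightarrow> j \<in> X p m"
        unfolding base X using True npj[of j] by auto
    qed
    then show ?thesis using cX[OF pR m2] True by (simp add: hh_def)
  next
    case False
    show ?thesis
    proof (cases "e = Suc (des p)")
      case True
      have "GFT p m e = Z p m"
      proof (rule set_eqI)
        fix j show "j \<in> GFT p m e \<longleftrightarrow> j \<in> Z p m"
          unfolding base Z using True by auto
      qed
      then show ?thesis using cZ[OF pR m2] True nF by (simp add: hh_def)
    next
      case False2: False
      have "GFT p m e = {}"
      proof -
        { fix j assume "j \<in> GFT p m e"
          then have "des p + 1 - (if dsc p (j - 1) then 1 else 0) = e" using base by blast
          then have False using False False2 by (simp split: if_splits) }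
        then show ?thesis by blast
      qed
      then show ?thesis using False False2 by (simp add: hh_def)
    qed
  qed
qed

lemma TT_eq:
  assumes F: "dsc p 0" and L: "dsc p (m - 2)"
  shows "card (GTF p m e) = card (GFT p m e)"
proof -
  note memT = memTF[OF pR m2] and memF = memFT[OF pR m2] and ndm = ndm[OF pR m2] and npj = npj[OF pR m2]
  have a: "GTF p m e = (if e = des p then {m} else {})"
  proof (rule set_eqI)
    fix j
    show "j \<in> GTF p m e \<longleftrightarrow> j \<in> (if e = des p then {m} else {})"
    proof
      assume "j \<in> GTF p m e"
      then have h: "j \<le> m" "\<not> dsc p j" "j = 0 \<or> (2 \<le> j \<and> dsc p 0)"
        "\<not> (j \<noteq> m \<and> (Suc j = m \<or> dsc p (m - 2)))"
        "des p + (if j < m then 1 else 0) - (if 0 < j \<and> dsc p (j - 1) then 1 else 0) = e"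
        unfolding memT by blast+
      have "j = m" using h(4) L by auto
      then show "j \<in> (if e = des p then {m} else {})" using h(5) ndm by simp
    next
      assume "j \<in> (if e = des p then {m} else {})"
      then have "j = m" "e = des p" by (auto split: if_splits)
      then show "j \<in> GTF p m e" unfolding memT using F ndm m2 by auto
    qed
  qed
  have b: "GFT p m e = (if e = des p then {1} else {})"
  proof (rule set_eqI)
    fix j
    show "j \<in> GFT p m e \<longleftrightarrow> j \<in> (if e = des p then {1} else {})"
    proof
      assume "j \<in> GFT p m e"
      then have h: "j \<le> m" "\<not> dsc p j" "\<not> (j = 0 \<or> (2 \<le> j \<and> dsc p 0))"
        "des p + (if j < m then 1 else 0) - (if 0 < j \<and> dsc p (j - 1) then 1 else 0) = e"
        unfolding memF by blast+
      have "j = 1" using h(3) F by auto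
      then show "j \<in> (if e = des p then {1} else {})" using h(4) F m2 by simp
    next
      assume "j \<in> (if e = des p then {1} else {})"
      then have "j = 1" "e = des p" by (auto split: if_splits)
      then show "j \<in> GFT p m e" unfolding memF using F L m2 npj[of 1] by auto
    qed
  qed
  show ?thesis using a b by simp
qed

lemma FF_eq:
  assumes nF: "\<not> dsc p 0" and nL: "\<not> dsc p (m - 2)"
  shows "card (GTF p m e) = card (GFT p m e)"
proof -
  note memT = memTF[OF pR m2] and memF = memFT[OF pR m2] and ndm = ndm[OF pR m2] and npj = npj[OF pR m2]
  have a: "GTF p m e = (if e = Suc (des p) then {0} else {})"
  proof (rule set_eqI)
    fix j
    show "j \<in> GTF p m e \<longleftrightarrow> j \<in> (if e = Suc (des p) then {0} else {})"
    proof
      assume "j \<in> GTF p m e"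
      then have h: "j \<le> m" "\<not> dsc p j" "j = 0 \<or> (2 \<le> j \<and> dsc p 0)"
        "\<not> (j \<noteq> m \<and> (Suc j = m \<or> dsc p (m - 2)))"
        "des p + (if j < m then 1 else 0) - (if 0 < j \<and> dsc p (j - 1) then 1 else 0) = e"
        unfolding memT by blast+
      have "j = 0" using h(3) nF by auto
      then show "j \<in> (if e = Suc (des p) then {0} else {})" using h(5) m2 by simp
    next
      assume "j \<in> (if e = Suc (des p) then {0} else {})"
      then have "j = 0" "e = Suc (des p)" by (auto split: if_splits)
      then show "j \<in> GTF p m e" unfolding memT using nF nL m2 by auto
    qed
  qed
  have b: "GFT p m e = (if e = Suc (des p) then {m - 1} else {})"
  proof (rule set_eqI)
    fix j
    show "j \<in> GFT p m e \<longleftrightarrow> j \<in> (if e = Suc (des p) then {m - 1} else {})"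
    proof
      assume "j \<in> GFT p m e"
      then have h: "j \<le> m" "\<not> dsc p j" "\<not> (j = 0 \<or> (2 \<le> j \<and> dsc p 0))"
        "j \<noteq> m \<and> (Suc j = m \<or> dsc p (m - 2))"
        "des p + (if j < m then 1 else 0) - (if 0 < j \<and> dsc p (j - 1) then 1 else 0) = e"
        unfolding memF by blast+
      have j: "Suc j = m" using h(4) nL by auto
      then have "j - 1 = m - 2" by simp
      then have "\<not> dsc p (j - 1)" using nL by simp
      then show "j \<in> (if e = Suc (des p) then {m - 1} else {})" using h(5) j by auto
    next
      assume "j \<in> (if e = Suc (des p) then {m - 1} else {})"
      then have j: "j = m - 1" "e = Suc (des p)" by (auto split: if_splits)
      have "m - 1 - 1 = m - 2" by simp
      then show "j \<in> GFT p m e" unfolding memF using j nF nL m2 ndm by auto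
    qed
  qed
  show ?thesis using a b by simp
qed

end


lemma small_types:
  assumes "p \<in> RS m" "m \<le> 2"
  shows "\<not> TFt p" "\<not> FTt p"
proof -
  have l: "length p = m" using RS_elem(3)[OF assms(1)] .
  have "m - 2 = 0" using assms(2) by simp
  then show "\<not> TFt p" "\<not> FTt p" unfolding TFt_def FTt_def l by auto
qed

lemma des_le: "des p \<le> length p"
proof -
  have "{i. dsc p i} \<subseteq> {..<length p}" by (auto simp: dsc_def)
  then show ?thesis unfolding des_dsc by (metis card_lessThan card_mono finite_lessThan)
qed

lemma sum_by_des:
  assumes "finite A" "\<forall>p\<in>A. des p \<le> N"
  shows "(\<Sum>p\<in>A. f (des p)) = (\<Sum>d\<le>N. card {p\<in>A. des p = d} * f d)"
proof -
  have "(\<Sum>p\<in>A. f (des p)) = (\<Sum>d\<le>N. \<Sum>p\<in>{x\<in>A. des x = d}. f (des p))"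
    by (rule sum.group[symmetric]) (use assms in auto)
  also have "\<dots> = (\<Sum>d\<le>N. card {p\<in>A. des p = d} * f d)"
  proof (rule sum.cong)
    fix d assume "d \<in> {..N}"
    have "(\<Sum>p\<in>{x\<in>A. des x = d}. f (des p)) = (\<Sum>p\<in>{x\<in>A. des x = d}. f d)"
      by (rule sum.cong) auto
    then show "(\<Sum>p\<in>{x\<in>A. des x = d}. f (des p)) = card {p\<in>A. des p = d} * f d" by simp
  qed simp
  finally show ?thesis .
qed

lemma finite_RS: "finite (RS m)" unfolding RS_def
  by (rule finite_subset[OF _ finite_permutations_of_set[of "{1..m}"]]) auto

lemma split_TF:
  assumes pR: "p \<in> RS m" and m2: "2 \<le> m"
  shows "card (GTF p m e) = (if TFt p then hh m (des p) e else 0) + (if TFt p \<or> FTt p then 0 else card (GFT p m e))"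
    and "card (GFT p m e) = (if FTt p then hh m (des p) e else 0) + (if TFt p \<or> FTt p then 0 else card (GFT p m e))"
proof -
  have l: "length p - 2 = m - 2" using RS_elem(3)[OF pR] by simp
  have TF: "TFt p \<longleftrightarrow> dsc p 0 \<and> \<not> dsc p (m - 2)" unfolding TFt_def l ..
  have FT: "FTt p \<longleftrightarrow> \<not> dsc p 0 \<and> dsc p (m - 2)" unfolding FTt_def l ..
  consider "dsc p 0" "\<not> dsc p (m - 2)" | "\<not> dsc p 0" "dsc p (m - 2)" | "dsc p 0" "dsc p (m - 2)"
    | "\<not> dsc p 0" "\<not> dsc p (m - 2)" by blast
  then have "card (GTF p m e) = (if TFt p then hh m (des p) e else 0) + (if TFt p \<or> FTt p then 0 else card (GFT p m e))
    \<and> card (GFT p m e) = (if FTt p then hh m (des p) e else 0) + (if TFt p \<or> FTt p then 0 else card (GFT p m e))"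
  proof cases
    case 1 then show ?thesis using A1_TF[OF pR m2] A1_FT[OF pR m2] TF FT by simp
  next
    case 2 then show ?thesis using A2_TF[OF pR m2] A2_FT[OF pR m2] TF FT by simp
  next
    case 3 then show ?thesis using TT_eq[OF pR m2] TF FT by simp
  next
    case 4 then show ?thesis using FF_eq[OF pR m2] TF FT by simp
  qed
  then show "card (GTF p m e) = (if TFt p then hh m (des p) e else 0) + (if TFt p \<or> FTt p then 0 else card (GFT p m e))"
    and "card (GFT p m e) = (if FTt p then hh m (des p) e else 0) + (if TFt p \<or> FTt p then 0 else card (GFT p m e))"
    by blast+
qed

lemma sym_types: "card {p \<in> RS m. TFt p \<and> des p = e} = card {p \<in> RS m. FTt p \<and> des p = e}"
proof (induction m arbitrary: e)
  case 0
  have z: "{p \<in> RS 0. TFt p \<and> des p = e} = {}" "{p \<in> RS 0. FTt p \<and> des p = e} = {}"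
    using small_types[of _ 0] by auto
  show ?case unfolding z ..
next
  case (Suc m)
  show ?case
  proof (cases "2 \<le> m")
    case False
    then have z: "{p \<in> RS (Suc m). TFt p \<and> des p = e} = {}" "{p \<in> RS (Suc m). FTt p \<and> des p = e} = {}"
      using small_types[of _ "Suc m"] by auto
    show ?thesis unfolding z ..
  next
    case m2: True
    have c1: "card {q \<in> RS (Suc m). TFt q \<and> des q = e} = (\<Sum>p\<in>RS m. card (GTF p m e))"
      unfolding count_Suc by (rule sum.cong) (auto simp: GTF_def[OF _ m2])
    have c2: "card {q \<in> RS (Suc m). FTt q \<and> des q = e} = (\<Sum>p\<in>RS m. card (GFT p m e))"
      unfolding count_Suc by (rule sum.cong) (auto simp: GFT_def[OF _ m2])
    define r where "r p = (if TFt p \<or> FTt p then 0 else card (GFT p m e))" for p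
    have s1: "(\<Sum>p\<in>RS m. card (GTF p m e)) = (\<Sum>p\<in>RS m. (if TFt p then hh m (des p) e else 0)) + (\<Sum>p\<in>RS m. r p)"
      unfolding sum.distrib[symmetric] r_def by (rule sum.cong) (auto simp: split_TF(1)[OF _ m2])
    have s2: "(\<Sum>p\<in>RS m. card (GFT p m e)) = (\<Sum>p\<in>RS m. (if FTt p then hh m (des p) e else 0)) + (\<Sum>p\<in>RS m. r p)"
      unfolding sum.distrib[symmetric] r_def by (rule sum.cong) (auto simp: split_TF(2)[OF _ m2])
    have fin: "finite {p \<in> RS m. TFt p}" "finite {p \<in> RS m. FTt p}" using finite_RS by auto
    have bd: "\<forall>p\<in>{p \<in> RS m. TFt p}. des p \<le> m" "\<forall>p\<in>{p \<in> RS m. FTt p}. des p \<le> m"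
      using des_le RS_elem(3) by fastforce+
    have t1: "(\<Sum>p\<in>RS m. (if TFt p then hh m (des p) e else 0)) = (\<Sum>d\<le>m. card {p \<in> RS m. TFt p \<and> des p = d} * hh m d e)"
    proof -
      have "(\<Sum>p\<in>RS m. (if TFt p then hh m (des p) e else 0)) = (\<Sum>p\<in>{p \<in> RS m. TFt p}. hh m (des p) e)"
        using finite_RS by (simp add: sum.inter_filter)
      also have "\<dots> = (\<Sum>d\<le>m. card {p \<in> {p \<in> RS m. TFt p}. des p = d} * hh m d e)"
        by (rule sum_by_des[OF fin(1) bd(1)])
      also have "\<dots> = (\<Sum>d\<le>m. card {p \<in> RS m. TFt p \<and> des p = d} * hh m d e)"
      proof -
        have "\<And>d. {p \<in> {p \<in> RS m. TFt p}. des p = d} = {p \<in> RS m. TFt p \<and> des p = d}" by auto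
        then show ?thesis by (simp only:)
      qed
      finally show ?thesis .
    qed
    have t2: "(\<Sum>p\<in>RS m. (if FTt p then hh m (des p) e else 0)) = (\<Sum>d\<le>m. card {p \<in> RS m. FTt p \<and> des p = d} * hh m d e)"
    proof -
      have "(\<Sum>p\<in>RS m. (if FTt p then hh m (des p) e else 0)) = (\<Sum>p\<in>{p \<in> RS m. FTt p}. hh m (des p) e)"
        using finite_RS by (simp add: sum.inter_filter)
      also have "\<dots> = (\<Sum>d\<le>m. card {p \<in> {p \<in> RS m. FTt p}. des p = d} * hh m d e)"
        by (rule sum_by_des[OF fin(2) bd(2)])
      also have "\<dots> = (\<Sum>d\<le>m. card {p \<in> RS m. FTt p \<and> des p = d} * hh m d e)"
      proof -
        have "\<And>d. {p \<in> {p \<in> RS m. FTt p}. des p = d} = {p \<in> RS m. FTt p \<and> des p = d}" by auto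
        then show ?thesis by (simp only:)
      qed
      finally show ?thesis .
    qed
    show ?thesis using c1 c2 s1 s2 t1 t2 Suc.IH by simp
  qed
qed


lemma RS_pos_dist:
  assumes "p \<in> RS n"
  shows "\<And>i. i < length p \<Longrightarrow> 0 < p ! i"
    and "\<And>i k. i < length p \<Longrightarrow> k < length p \<Longrightarrow> i \<noteq> k \<Longrightarrow> p ! i \<noteq> p ! k"
proof -
  fix i assume "i < length p"
  then have "p ! i \<in> set p" by simp
  then show "0 < p ! i" using RS_elem(1)[OF assms] by auto
next
  fix i k assume "i < length p" "k < length p" "i \<noteq> k"
  then show "p ! i \<noteq> p ! k" using RS_elem(2)[OF assms] by (simp add: nth_eq_iff_index_eq)
qed

lemma uprun_eq:
  assumes pR: "p \<in> RS n"
  shows "uprun p = 1 + (2 * des p - (if dsc p (length p - 2) then 1 else 0))"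
proof -
  note pos = RS_pos_dist(1)[OF pR] and dis = RS_pos_dist(2)[OF pR]
  have np: "\<And>i. \<not> (dsc p i \<and> dsc p (Suc i))" using RS_nodd[OF pR] by (auto simp: hdd_dsc)
  define q where "q = 0 # p"
  define C' where "C' = {i. Suc i < length p \<and> ((q ! i < p ! i) \<noteq> (p ! i < p ! Suc i))}"
  define D where "D = {i. dsc p i}"
  define V where "V = {i. 0 < i \<and> dsc p (i - 1) \<and> Suc i < length p}"
  have C: "{j. 0 < j \<and> Suc j < length q \<and> ((q ! (j - 1) < q ! j) \<noteq> (q ! j < q ! Suc j))} = Suc ` C'"
  proof (rule set_eqI)
    fix j
    show "j \<in> {j. 0 < j \<and> Suc j < length q \<and> ((q ! (j - 1) < q ! j) \<noteq> (q ! j < q ! Suc j))} \<longleftrightarrow> j \<in> Suc ` C'"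
    proof (cases j)
      case 0 then show ?thesis by auto
    next
      case (Suc i)
      then show ?thesis unfolding C'_def q_def by auto
    qed
  qed
  have C'eq: "C' = D \<union> V"
  proof (rule set_eqI)
    fix i
    show "i \<in> C' \<longleftrightarrow> i \<in> D \<union> V"
    proof (cases "Suc i < length p")
      case False
      then show ?thesis unfolding C'_def D_def V_def dsc_def by auto
    next
      case True
      have a: "(q ! i < p ! i) \<longleftrightarrow> (i = 0 \<or> \<not> dsc p (i - 1))"
      proof (cases i)
        case 0
        have "0 < length p" using True by linarith
        then have "0 < p ! 0" by (rule pos)
        then show ?thesis using 0 unfolding q_def by simp
      next
        case (Suc i')
        have "p ! i' \<noteq> p ! i" using dis[of i' i] True Suc by simp
        then show ?thesis unfolding q_def dsc_def using Suc True by auto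
      qed
      have b: "(p ! i < p ! Suc i) \<longleftrightarrow> \<not> dsc p i"
      proof -
        have "p ! i \<noteq> p ! Suc i" using dis[of i "Suc i"] True by simp
        then show ?thesis unfolding dsc_def using True by auto
      qed
      have c: "0 < i \<Longrightarrow> dsc p (i - 1) \<Longrightarrow> \<not> dsc p i" using np[of "i - 1"] by simp
      show ?thesis unfolding C'_def D_def V_def using True a b c by auto
    qed
  qed
  have fD: "finite D" unfolding D_def by (rule fin_dsc)
  have fV: "finite V" unfolding V_def by (rule finite_subset[of _ "{..<length p}"]) auto
  have DV: "D \<inter> V = {}"
  proof -
    { fix i assume "i \<in> D" "i \<in> V"
      then have "0 < i" "dsc p (i - 1)" "dsc p i" unfolding D_def V_def by auto
      then have False using np[of "i - 1"] by simp }
    then show ?thesis by blast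
  qed
  have Veq: "V = Suc ` (D - {length p - 2})"
  proof (rule set_eqI)
    fix i
    show "i \<in> V \<longleftrightarrow> i \<in> Suc ` (D - {length p - 2})"
    proof
      assume "i \<in> V"
      then have h: "0 < i" "dsc p (i - 1)" "Suc i < length p" unfolding V_def by auto
      then have "i - 1 \<in> D - {length p - 2}" unfolding D_def by auto
      moreover have "i = Suc (i - 1)" using h by simp
      ultimately show "i \<in> Suc ` (D - {length p - 2})" by blast
    next
      assume "i \<in> Suc ` (D - {length p - 2})"
      then obtain t where t: "i = Suc t" "dsc p t" "t \<noteq> length p - 2" unfolding D_def by auto
      then have "Suc t < length p" by (simp add: dsc_def)
      then have "Suc i < length p" using t by auto
      then show "i \<in> V" unfolding V_def using t by simp
    qed
  qed
  have cV: "card V = des p - (if dsc p (length p - 2) then 1 else 0)"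
  proof -
    have "length p - 2 \<in> D \<longleftrightarrow> dsc p (length p - 2)" unfolding D_def by simp
    then show ?thesis unfolding Veq using fD by (simp add: card_image card_Diff_singleton_if des_dsc D_def[symmetric])
  qed
  have "uprun p = 1 + card (Suc ` C')" unfolding uprun_def alt_runs_def C[unfolded q_def] by simp
  also have "\<dots> = 1 + (card D + card V)" using fD fV DV by (simp add: card_image C'eq card_Un_disjoint)
  also have "card D = des p" unfolding D_def des_dsc ..
  finally have u: "uprun p = 1 + (des p + (des p - (if dsc p (length p - 2) then 1 else 0)))" using cV by simp
  have "dsc p (length p - 2) \<Longrightarrow> 1 \<le> des p"
  proof -
    assume "dsc p (length p - 2)"
    then have "{i. dsc p i} \<noteq> {}" by auto
    then show ?thesis unfolding des_dsc using fin_dsc[of p] by (simp add: Suc_le_eq card_gt_0_iff)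
  qed
  then show ?thesis using u by auto
qed

lemma pk_eq:
  assumes pR: "p \<in> RS n"
  shows "pk p = des p - (if dsc p 0 then 1 else 0)"
proof -
  note dis = RS_pos_dist(2)[OF pR]
  have np: "\<And>i. \<not> (dsc p i \<and> dsc p (Suc i))" using RS_nodd[OF pR] by (auto simp: hdd_dsc)
  have "{i. 0 < i \<and> Suc i < length p \<and> p ! (i - 1) < p ! i \<and> p ! i > p ! Suc i} = {i. dsc p i} - {0}"
  proof (rule set_eqI)
    fix i
    show "i \<in> {i. 0 < i \<and> Suc i < length p \<and> p ! (i - 1) < p ! i \<and> p ! i > p ! Suc i} \<longleftrightarrow> i \<in> {i. dsc p i} - {0}"
    proof (cases "0 < i \<and> Suc i < length p")
      case True
      then obtain t where t: "i = Suc t" by (metis gr0_implies_Suc)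
      have "p ! t \<noteq> p ! i" using dis[of t i] True t by simp
      moreover have "dsc p i \<Longrightarrow> \<not> dsc p t" using np[of t] t by simp
      ultimately show ?thesis using True t unfolding dsc_def by auto
    next
      case False
      then show ?thesis unfolding dsc_def by auto
    qed
  qed
  then show ?thesis unfolding pk_def des_dsc using fin_dsc[of p] by (simp add: card_Diff_singleton_if)
qed


lemma card3:
  assumes "finite A" "finite B" "finite C" "A \<inter> B = {}" "A \<inter> C = {}" "B \<inter> C = {}"
  shows "card (A \<union> B \<union> C) = card A + card B + card C"
proof -
  have "card (A \<union> B) = card A + card B" using assms by (simp add: card_Un_disjoint)
  moreover have "card (A \<union> B \<union> C) = card (A \<union> B) + card C"
    using assms by (intro card_Un_disjoint) auto
  ultimately show ?thesis by simp
qed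

lemma des_pos: "dsc p i \<Longrightarrow> 1 \<le> des p"
proof -
  assume "dsc p i"
  then have "{i. dsc p i} \<noteq> {}" by auto
  then show ?thesis unfolding des_dsc using fin_dsc[of p] by (simp add: Suc_le_eq card_gt_0_iff)
qed

theorem mainTheorem8:
  fixes n k :: nat
  assumes "n \<ge> 1"
  shows "S n k = T n (2 * k) + T n (2 * k + 1) \<and> P n k = T n (2 * k + 1) + T n (2 * k + 2)"
proof -
  have fin: "finite (RS n)" by (rule finite_RS)
  define L where "L p = dsc p (length p - 2)" for p
  define F where "F p = dsc p 0" for p
  have up: "\<And>p. p \<in> RS n \<Longrightarrow> uprun p = 1 + (2 * des p - (if L p then 1 else 0))"
    unfolding L_def by (rule uprun_eq)
  have Lp: "\<And>p. L p \<Longrightarrow> 1 \<le> des p" unfolding L_def by (rule des_pos)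
  have Fp: "\<And>p. F p \<Longrightarrow> 1 \<le> des p" unfolding F_def by (rule des_pos)
  have pkq: "\<And>p. p \<in> RS n \<Longrightarrow> pk p = des p - (if F p then 1 else 0)"
    unfolding F_def by (rule pk_eq)
  have part1: "S n k = T n (2 * k) + T n (2 * k + 1)"
  proof -
    have e: "{p \<in> RS n. des p = k} = {p \<in> RS n. uprun p = 2 * k} \<union> {p \<in> RS n. uprun p = 2 * k + 1}"
    proof (rule set_eqI)
      fix p
      show "p \<in> {p \<in> RS n. des p = k} \<longleftrightarrow> p \<in> {p \<in> RS n. uprun p = 2 * k} \<union> {p \<in> RS n. uprun p = 2 * k + 1}"
      proof (cases "p \<in> RS n")
        case True
        show ?thesis using up[OF True] Lp[of p] True by auto
      qed simp
    qed
    have "card ({p \<in> RS n. uprun p = 2 * k} \<union> {p \<in> RS n. uprun p = 2 * k + 1}) = T n (2 * k) + T n (2 * k + 1)"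
      unfolding T_def using fin by (intro card_Un_disjoint) auto
    then show ?thesis unfolding S_def e .
  qed
  have part2: "P n k = T n (2 * k + 1) + T n (2 * k + 2)"
  proof -
    have e1: "{p \<in> RS n. pk p = k} = {p \<in> RS n. des p - (if F p then 1 else 0) = k}" using pkq by auto
    have e2: "{p \<in> RS n. uprun p = 2 * k + 1} \<union> {p \<in> RS n. uprun p = 2 * k + 2} = {p \<in> RS n. des p - (if L p then 1 else 0) = k}"
    proof (rule set_eqI)
      fix p
      show "p \<in> {p \<in> RS n. uprun p = 2 * k + 1} \<union> {p \<in> RS n. uprun p = 2 * k + 2} \<longleftrightarrow> p \<in> {p \<in> RS n. des p - (if L p then 1 else 0) = k}"
      proof (cases "p \<in> RS n")
        case True
        show ?thesis using up[OF True] Lp[of p] True by auto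
      qed simp
    qed
    have c2: "T n (2 * k + 1) + T n (2 * k + 2) = card {p \<in> RS n. des p - (if L p then 1 else 0) = k}"
    proof -
      have "card ({p \<in> RS n. uprun p = 2 * k + 1} \<union> {p \<in> RS n. uprun p = 2 * k + 2}) = T n (2 * k + 1) + T n (2 * k + 2)"
        unfolding T_def using fin by (intro card_Un_disjoint) auto
      then show ?thesis unfolding e2 by simp
    qed
    define A where "A = {p \<in> RS n. F p = L p \<and> des p - (if F p then 1 else 0) = k}"
    have TF: "\<And>p. TFt p \<longleftrightarrow> F p \<and> \<not> L p" unfolding TFt_def F_def L_def ..
    have FT: "\<And>p. FTt p \<longleftrightarrow> \<not> F p \<and> L p" unfolding FTt_def F_def L_def ..
    have s1: "{p \<in> RS n. des p - (if F p then 1 else 0) = k} = A \<union> {p \<in> RS n. TFt p \<and> des p = Suc k} \<union> {p \<in> RS n. FTt p \<and> des p = k}" (is "?lhs = ?rhs")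
    proof (rule set_eqI)
      fix p show "p \<in> ?lhs \<longleftrightarrow> p \<in> ?rhs" using Fp[of p] Lp[of p] unfolding A_def TF FT by auto
    qed
    have s2: "{p \<in> RS n. des p - (if L p then 1 else 0) = k} = A \<union> {p \<in> RS n. FTt p \<and> des p = Suc k} \<union> {p \<in> RS n. TFt p \<and> des p = k}" (is "?lhs = ?rhs")
    proof (rule set_eqI)
      fix p show "p \<in> ?lhs \<longleftrightarrow> p \<in> ?rhs" using Fp[of p] Lp[of p] unfolding A_def TF FT by auto
    qed
    have f: "finite A" "\<And>Q. finite {p \<in> RS n. Q p}" unfolding A_def using fin by auto
    have k1: "card {p \<in> RS n. des p - (if F p then 1 else 0) = k} = card A + card {p \<in> RS n. TFt p \<and> des p = Suc k} + card {p \<in> RS n. FTt p \<and> des p = k}"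
      unfolding s1 by (rule card3) (use f in \<open>auto simp: A_def TF FT\<close>)
    have k2: "card {p \<in> RS n. des p - (if L p then 1 else 0) = k} = card A + card {p \<in> RS n. FTt p \<and> des p = Suc k} + card {p \<in> RS n. TFt p \<and> des p = k}"
      unfolding s2 by (rule card3) (use f in \<open>auto simp: A_def TF FT\<close>)
    have "P n k = card {p \<in> RS n. des p - (if F p then 1 else 0) = k}" unfolding P_def e1 ..
    also have "\<dots> = card {p \<in> RS n. des p - (if L p then 1 else 0) = k}"
      using k1 k2 sym_types[of n "Suc k"] sym_types[of n k] by simp
    finally show ?thesis using c2 by simp
  qed
  show ?thesis using part1 part2 by blast
qed

end
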